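(* Let $(W_n)$ be a standard numbering of the c.e. subsets of $\omega$, $V_n=\{(i,j)\mid\langle i,j\rangle\in W_n\}$ for a computable pairing bijection $\langle\cdot,\cdot\rangle$, and let $t$ be a computable function such that $V_{t(n)}$ is the transitive closure of $V_n$ for every $n$. Then the set $\{n\in\omega\mid V_{t(n)}\text{ is interpolable}\}$ is $\Pi^0_2$-complete; that is, deciding whether a given c.e. transitive relation on $\omega$ is interpolable is $\Pi^0_2$-complete.
   Context: A transitive relation $\prec$ on $\omega$ is interpolable if for every $y$ the initial segment $\{x\mid x\prec y\}$ is directed, i.e. non-empty and such that any two of its elements have a $\prec$-upper bound in it. *)

theory Defs
  imports Main
begin

definition rcomp :: "(nat list \<Rightarrow> nat option) \<Rightarrow> (nat list \<Rightarrow> nat option) list \<Rightarrow> nat list \<Rightarrow> nat option" where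
  "rcomp g hs xs = (if (\<forall>h\<in>set hs. h xs \<noteq> None) then g (map (\<lambda>h. the (h xs)) hs) else None)"

fun rprec :: "(nat list \<Rightarrow> nat option) \<Rightarrow> (nat list \<Rightarrow> nat option) \<Rightarrow> nat list \<Rightarrow> nat option" where
  "rprec g h [] = None"
| "rprec g h (0 # xs) = g xs"
| "rprec g h (Suc y # xs) = (case rprec g h (y # xs) of None \<Rightarrow> None | Some v \<Rightarrow> h (y # v # xs))"

definition rmu :: "(nat list \<Rightarrow> nat option) \<Rightarrow> nat list \<Rightarrow> nat option" where
  "rmu f xs = (if (\<exists>y. f (y # xs) = Some 0 \<and> (\<forall>z<y. f (z # xs) \<noteq> None))
     then Some (LEAST y. f (y # xs) = Some 0 \<and> (\<forall>z<y. f (z # xs) \<noteq> None)) else None)"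

text \<open>recfn n f: f is a partial recursive function of arity n (only its values on
  argument lists of length n are meaningful).\<close>
inductive recfn :: "nat \<Rightarrow> (nat list \<Rightarrow> nat option) \<Rightarrow> bool" where
  rzero: "recfn 0 (\<lambda>_. Some 0)"
| rsucc: "recfn 1 (\<lambda>xs. Some (Suc (hd xs)))"
| rproj: "i < n \<Longrightarrow> recfn n (\<lambda>xs. Some (xs ! i))"
| rcomp: "recfn (length hs) g \<Longrightarrow> (\<forall>h\<in>set hs. recfn n h) \<Longrightarrow> recfn n (rcomp g hs)"
| rprec: "recfn n g \<Longrightarrow> recfn (Suc (Suc n)) h \<Longrightarrow> recfn (Suc n) (rprec g h)"
| rmu: "recfn (Suc n) f \<Longrightarrow> recfn n (rmu f)"

definition computable1 :: "(nat \<Rightarrow> nat) \<Rightarrow> bool" where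
  "computable1 f \<longleftrightarrow> (\<exists>g. recfn 1 g \<and> (\<forall>x. g [x] = Some (f x)))"

definition computable2 :: "(nat \<Rightarrow> nat \<Rightarrow> nat) \<Rightarrow> bool" where
  "computable2 f \<longleftrightarrow> (\<exists>g. recfn 2 g \<and> (\<forall>x y. g [x, y] = Some (f x y)))"

definition ce_rel2 :: "(nat \<Rightarrow> nat \<Rightarrow> bool) \<Rightarrow> bool" where
  "ce_rel2 R \<longleftrightarrow> (\<exists>g. recfn 2 g \<and> (\<forall>x y. R x y \<longleftrightarrow> g [x, y] \<noteq> None))"

definition decidable3 :: "(nat \<Rightarrow> nat \<Rightarrow> nat \<Rightarrow> bool) \<Rightarrow> bool" where
  "decidable3 R \<longleftrightarrow> (\<exists>g. recfn 3 g \<and> (\<forall>x y z. g [x, y, z] = Some (if R x y z then 1 else 0)))"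

definition computable_numbering :: "(nat \<Rightarrow> nat set) \<Rightarrow> bool" where
  "computable_numbering U \<longleftrightarrow> ce_rel2 (\<lambda>n x. x \<in> U n)"

definition standard_numbering :: "(nat \<Rightarrow> nat set) \<Rightarrow> bool" where
  "standard_numbering W \<longleftrightarrow> computable_numbering W \<and>
     (\<forall>U. computable_numbering U \<longrightarrow> (\<exists>f. computable1 f \<and> (\<forall>n. U n = W (f n))))"

definition Pi02 :: "nat set \<Rightarrow> bool" where
  "Pi02 A \<longleftrightarrow> (\<exists>R. decidable3 R \<and> (\<forall>n. n \<in> A \<longleftrightarrow> (\<forall>x. \<exists>y. R n x y)))"

definition many_one_reducible :: "nat set \<Rightarrow> nat set \<Rightarrow> bool" where
  "many_one_reducible B A \<longleftrightarrow> (\<exists>f. computable1 f \<and> (\<forall>n. n \<in> B \<longleftrightarrow> f n \<in> A))"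

definition Pi02_complete :: "nat set \<Rightarrow> bool" where
  "Pi02_complete A \<longleftrightarrow> Pi02 A \<and> (\<forall>B. Pi02 B \<longrightarrow> many_one_reducible B A)"

definition interpolable :: "(nat \<times> nat) set \<Rightarrow> bool" where
  "interpolable R \<longleftrightarrow> (\<forall>y. {x. (x, y) \<in> R} \<noteq> {} \<and>
     (\<forall>a\<in>{x. (x, y) \<in> R}. \<forall>b\<in>{x. (x, y) \<in> R}. \<exists>c\<in>{x. (x, y) \<in> R}. (a, c) \<in> R \<and> (b, c) \<in> R))"

end

theory Submission
  imports Defs "HOL-Library.Nat_Bijection"
begin

definition tot :: "nat \<Rightarrow> (nat list \<Rightarrow> nat) \<Rightarrow> bool" where
  "tot k F \<longleftrightarrow> (\<exists>g. recfn k g \<and> (\<forall>xs. length xs = k \<longrightarrow> g xs = Some (F xs)))"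

definition part :: "nat \<Rightarrow> (nat list \<Rightarrow> nat option) \<Rightarrow> bool" where
  "part k f \<longleftrightarrow> (\<exists>g. recfn k g \<and> (\<forall>xs. length xs = k \<longrightarrow> g xs = f xs))"

definition dec :: "nat \<Rightarrow> (nat list \<Rightarrow> bool) \<Rightarrow> bool" where
  "dec k P \<longleftrightarrow> tot k (\<lambda>xs. if P xs then 1 else 0)"

definition listtot :: "nat \<Rightarrow> nat \<Rightarrow> (nat list \<Rightarrow> nat list) \<Rightarrow> bool" where
  "listtot k m L \<longleftrightarrow> (\<forall>xs. length xs = k \<longrightarrow> length (L xs) = m) \<and> (\<forall>i<m. tot k (\<lambda>xs. L xs ! i))"

lemma tot_cong: "tot k F \<Longrightarrow> (\<And>xs. length xs = k \<Longrightarrow> F xs = G xs) \<Longrightarrow> tot k G"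
  unfolding tot_def by metis

lemma dec_cong: "dec k P \<Longrightarrow> (\<And>xs. length xs = k \<Longrightarrow> P xs = Q xs) \<Longrightarrow> dec k Q"
  unfolding dec_def by (erule tot_cong) auto

lemma tot_const: "tot k (\<lambda>_. c)"
proof (induction c)
  case 0
  have "recfn (length []) (\<lambda>_. Some 0)" by (simp add: recfn.rzero)
  then have "recfn k (rcomp (\<lambda>_. Some 0) [])" by (intro recfn.rcomp) auto
  then show ?case unfolding tot_def by (intro exI[of _ "rcomp (\<lambda>_. Some 0) []"]) (auto simp: rcomp_def)
next
  case (Suc c)
  then obtain g where g: "recfn k g" "\<forall>xs. length xs = k \<longrightarrow> g xs = Some c" unfolding tot_def by auto
  have "recfn (length [g]) (\<lambda>xs. Some (Suc (hd xs)))" using recfn.rsucc by simp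
  then have "recfn k (rcomp (\<lambda>xs. Some (Suc (hd xs))) [g])" using g by (intro recfn.rcomp) auto
  then show ?case unfolding tot_def using g
    by (intro exI[of _ "rcomp (\<lambda>xs. Some (Suc (hd xs))) [g]"]) (auto simp: rcomp_def)
qed

lemma tot_proj: "i < k \<Longrightarrow> tot k (\<lambda>xs. xs ! i)"
  unfolding tot_def using recfn.rproj by blast

lemma tot_compL:
  assumes G: "tot m G" and L: "listtot k m L"
  shows "tot k (\<lambda>xs. G (L xs))"
proof -
  obtain g where g: "recfn m g" "\<forall>xs. length xs = m \<longrightarrow> g xs = Some (G xs)" using G unfolding tot_def by auto
  have "\<forall>i\<in>{..<m}. \<exists>h. recfn k h \<and> (\<forall>xs. length xs = k \<longrightarrow> h xs = Some (L xs ! i))"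
    using L unfolding listtot_def tot_def by auto
  then obtain hf where hf: "\<forall>i\<in>{..<m}. recfn k (hf i) \<and> (\<forall>xs. length xs = k \<longrightarrow> hf i xs = Some (L xs ! i))"
    by (metis bchoice)
  define hs where "hs = map hf [0..<m]"
  have "recfn k (rcomp g hs)" using g hf unfolding hs_def by (intro recfn.rcomp) auto
  moreover have "rcomp g hs xs = Some (G (L xs))" if "length xs = k" for xs
  proof -
    have a: "\<forall>h\<in>set hs. h xs \<noteq> None" using hf that unfolding hs_def by auto
    have "map (\<lambda>h. the (h xs)) hs = map (\<lambda>i. L xs ! i) [0..<m]" using hf that unfolding hs_def by auto
    also have "\<dots> = L xs" using L that unfolding listtot_def by (metis map_nth)
    finally show ?thesis using a g L that unfolding rcomp_def listtot_def by auto
  qed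
  ultimately show ?thesis unfolding tot_def by blast
qed

lemma listtot_Nil: "listtot k 0 (\<lambda>_. [])"
  unfolding listtot_def by auto

lemma listtot_Cons: "tot k A \<Longrightarrow> listtot k m L \<Longrightarrow> listtot k (Suc m) (\<lambda>xs. A xs # L xs)"
  unfolding listtot_def by (auto simp: less_Suc_eq_0_disj)

lemma listtot_drop: "j + m = k \<Longrightarrow> listtot k m (\<lambda>xs. drop j xs)"
  unfolding listtot_def by (auto intro: tot_cong[OF tot_proj[of "j + _"]])

lemma listtot_map: "(\<And>i. i < m \<Longrightarrow> tot k (F i)) \<Longrightarrow> listtot k m (\<lambda>xs. map (\<lambda>i. F i xs) [0..<m])"
  unfolding listtot_def by auto

lemma tot_un: "tot 1 (\<lambda>xs. f (xs ! 0)) \<Longrightarrow> tot k A \<Longrightarrow> tot k (\<lambda>xs. f (A xs))"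
proof -
  assume a: "tot 1 (\<lambda>xs. f (xs ! 0))" "tot k A"
  have "listtot k (Suc 0) (\<lambda>xs. [A xs])" by (rule listtot_Cons[OF a(2) listtot_Nil])
  from tot_compL[OF a(1)[simplified] this] show ?thesis by simp
qed

lemma tot_bin: "tot 2 (\<lambda>xs. f (xs ! 0) (xs ! 1)) \<Longrightarrow> tot k A \<Longrightarrow> tot k B \<Longrightarrow> tot k (\<lambda>xs. f (A xs) (B xs))"
proof -
  assume a: "tot 2 (\<lambda>xs. f (xs ! 0) (xs ! 1))" "tot k A" "tot k B"
  have "listtot k (Suc (Suc 0)) (\<lambda>xs. [A xs, B xs])" by (rule listtot_Cons[OF a(2) listtot_Cons[OF a(3) listtot_Nil]])
  from tot_compL[OF a(1)[unfolded numeral_2_eq_2] this] show ?thesis by simp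
qed

lemma tot_tern: "tot 3 (\<lambda>xs. f (xs ! 0) (xs ! 1) (xs ! 2)) \<Longrightarrow> tot k A \<Longrightarrow> tot k B \<Longrightarrow> tot k C
   \<Longrightarrow> tot k (\<lambda>xs. f (A xs) (B xs) (C xs))"
proof -
  assume a: "tot 3 (\<lambda>xs. f (xs ! 0) (xs ! 1) (xs ! 2))" "tot k A" "tot k B" "tot k C"
  have "listtot k (Suc (Suc (Suc 0))) (\<lambda>xs. [A xs, B xs, C xs])"
    by (rule listtot_Cons[OF a(2) listtot_Cons[OF a(3) listtot_Cons[OF a(4) listtot_Nil]]])
  from tot_compL[OF a(1)[unfolded numeral_3_eq_3] this] show ?thesis by (simp add: numeral_2_eq_2)
qed

fun PR :: "(nat list \<Rightarrow> nat) \<Rightarrow> (nat list \<Rightarrow> nat) \<Rightarrow> nat \<Rightarrow> nat list \<Rightarrow> nat" where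
  "PR G H 0 xs = G xs"
| "PR G H (Suc y) xs = H (y # PR G H y xs # xs)"

lemma tot_PR:
  assumes G: "tot k G" and H: "tot (Suc (Suc k)) H"
  shows "tot (Suc k) (\<lambda>xs. PR G H (hd xs) (tl xs))"
proof -
  obtain g where g: "recfn k g" "\<forall>xs. length xs = k \<longrightarrow> g xs = Some (G xs)" using G unfolding tot_def by auto
  obtain h where h: "recfn (Suc (Suc k)) h" "\<forall>xs. length xs = Suc (Suc k) \<longrightarrow> h xs = Some (H xs)"
    using H unfolding tot_def by auto
  have "rprec g h (y # xs) = Some (PR G H y xs)" if "length xs = k" for y xs
    using that g h by (induction y) auto
  moreover have "recfn (Suc k) (rprec g h)" using g h by (intro recfn.rprec)
  ultimately show ?thesis unfolding tot_def
    by (intro exI[of _ "rprec g h"]) (auto simp: length_Suc_conv)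
qed

lemma tot_PR':
  assumes "tot k G" "tot (Suc (Suc k)) H" "tot j Y" "listtot j k P"
  shows "tot j (\<lambda>xs. PR G H (Y xs) (P xs))"
  using tot_compL[OF tot_PR[OF assms(1,2)] listtot_Cons[OF assms(3,4)]] by simp

lemma tot_succ1: "tot 1 (\<lambda>xs. Suc (xs ! 0))"
  unfolding tot_def using recfn.rsucc by (auto simp: length_Suc_conv intro!: exI[of _ "\<lambda>xs. Some (Suc (hd xs))"])

lemma tot_Suc: "tot k A \<Longrightarrow> tot k (\<lambda>xs. Suc (A xs))"
  by (rule tot_un[OF tot_succ1])

lemma tot_add2: "tot 2 (\<lambda>xs. xs ! 0 + xs ! 1)"
proof -
  have t: "tot (Suc (Suc 0)) (\<lambda>xs. PR (\<lambda>ys. ys ! 0) (\<lambda>ys. Suc (ys ! 1)) (hd xs) (tl xs))"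
    by (intro tot_PR tot_proj tot_Suc) auto
  have e: "PR (\<lambda>ys. ys ! 0) (\<lambda>ys. Suc (ys ! 1)) y [x] = y + x" for y x by (induction y) auto
  show ?thesis unfolding numeral_2_eq_2 by (rule tot_cong[OF t]) (insert e, auto simp: length_Suc_conv)
qed

lemma tot_add: "tot k A \<Longrightarrow> tot k B \<Longrightarrow> tot k (\<lambda>xs. A xs + B xs)"
  by (rule tot_bin[OF tot_add2])

lemma tot_pred1: "tot 1 (\<lambda>xs. xs ! 0 - 1)"
proof -
  have t: "tot (Suc 0) (\<lambda>xs. PR (\<lambda>ys. 0) (\<lambda>ys. ys ! 0) (hd xs) (tl xs))"
    by (intro tot_PR tot_proj tot_const) auto
  have e: "PR (\<lambda>ys. 0) (\<lambda>ys. ys ! 0) y [] = y - 1" for y by (induction y) auto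
  show ?thesis unfolding One_nat_def by (rule tot_cong[OF t]) (insert e, auto simp: length_Suc_conv)
qed

lemma tot_pred: "tot k A \<Longrightarrow> tot k (\<lambda>xs. A xs - 1)"
  by (rule tot_un[OF tot_pred1])

lemma tot_sub2: "tot 2 (\<lambda>xs. xs ! 0 - xs ! 1)"
proof -
  have t: "tot (Suc (Suc 0)) (\<lambda>xs. PR (\<lambda>ys. ys ! 0) (\<lambda>ys. ys ! 1 - 1) (hd xs) (tl xs))"
    by (intro tot_PR tot_proj tot_pred) auto
  have e: "PR (\<lambda>ys. ys ! 0) (\<lambda>ys. ys ! 1 - 1) y [x] = x - y" for y x by (induction y) auto
  have "tot (Suc (Suc 0)) (\<lambda>xs. xs ! 1 - xs ! 0)" by (rule tot_cong[OF t]) (insert e, auto simp: length_Suc_conv)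
  then have "tot 2 (\<lambda>xs. xs ! 1 - xs ! 0)" by (simp add: numeral_2_eq_2)
  then have "tot 2 (\<lambda>xs. (\<lambda>a b. b - a) (xs ! 1) (xs ! 0))"
    by (rule tot_bin) (auto intro: tot_proj)
  then show ?thesis by simp
qed

lemma tot_sub: "tot k A \<Longrightarrow> tot k B \<Longrightarrow> tot k (\<lambda>xs. A xs - B xs)"
  by (rule tot_bin[OF tot_sub2])

lemma tot_mult2: "tot 2 (\<lambda>xs. xs ! 0 * xs ! 1)"
proof -
  have t: "tot (Suc (Suc 0)) (\<lambda>xs. PR (\<lambda>ys. 0) (\<lambda>ys. ys ! 1 + ys ! 2) (hd xs) (tl xs))"
    by (intro tot_PR tot_proj tot_add tot_const) auto
  have e: "PR (\<lambda>ys. 0) (\<lambda>ys. ys ! 1 + ys ! 2) y [x] = y * x" for y x by (induction y) auto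
  show ?thesis unfolding numeral_2_eq_2 by (rule tot_cong[OF t]) (insert e, auto simp: length_Suc_conv)
qed

lemma tot_mult: "tot k A \<Longrightarrow> tot k B \<Longrightarrow> tot k (\<lambda>xs. A xs * B xs)"
  by (rule tot_bin[OF tot_mult2])

lemma tot_ifz3: "tot 3 (\<lambda>xs. if xs ! 0 = 0 then xs ! 1 else xs ! 2)"
proof -
  have t: "tot (Suc (Suc (Suc 0))) (\<lambda>xs. PR (\<lambda>ys. ys ! 0) (\<lambda>ys. ys ! 3) (hd xs) (tl xs))"
    by (intro tot_PR tot_proj) auto
  have e: "PR (\<lambda>ys. ys ! 0) (\<lambda>ys. ys ! 3) y [a, b] = (if y = 0 then a else b)" for y a b
    by (cases y) auto
  show ?thesis unfolding numeral_3_eq_3 by (rule tot_cong[OF t]) (insert e, auto simp: length_Suc_conv)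
qed

lemma tot_ifz: "tot k C \<Longrightarrow> tot k A \<Longrightarrow> tot k B \<Longrightarrow> tot k (\<lambda>xs. if C xs = 0 then A xs else B xs)"
  by (rule tot_tern[OF tot_ifz3])

lemma tot_if: "dec k P \<Longrightarrow> tot k A \<Longrightarrow> tot k B \<Longrightarrow> tot k (\<lambda>xs. if P xs then A xs else B xs)"
  unfolding dec_def by (drule tot_ifz[of _ _ B A]) (auto elim: tot_cong)

lemma dec_eq: "tot k A \<Longrightarrow> tot k B \<Longrightarrow> dec k (\<lambda>xs. A xs = B xs)"
  unfolding dec_def
  by (rule tot_cong, rule tot_ifz[of _ "\<lambda>xs. (A xs - B xs) + (B xs - A xs)" "\<lambda>_. 1" "\<lambda>_. 0"])
     (auto intro: tot_add tot_sub tot_const)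

lemma dec_less: "tot k A \<Longrightarrow> tot k B \<Longrightarrow> dec k (\<lambda>xs. A xs < B xs)"
  unfolding dec_def by (rule tot_cong, rule tot_ifz[of _ "\<lambda>xs. B xs - A xs" "\<lambda>_. 0" "\<lambda>_. 1"])
     (auto intro: tot_sub tot_const)

lemma dec_not: "dec k P \<Longrightarrow> dec k (\<lambda>xs. \<not> P xs)"
  unfolding dec_def by (rule tot_cong, rule tot_sub[OF tot_const]) auto

lemma dec_conj: "dec k P \<Longrightarrow> dec k Q \<Longrightarrow> dec k (\<lambda>xs. P xs \<and> Q xs)"
  unfolding dec_def by (rule tot_cong, rule tot_mult) (assumption+, auto)

lemma dec_disj: "dec k P \<Longrightarrow> dec k Q \<Longrightarrow> dec k (\<lambda>xs. P xs \<or> Q xs)"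
  using dec_not[OF dec_conj[OF dec_not dec_not]] by simp

lemma dec_imp: "dec k P \<Longrightarrow> dec k Q \<Longrightarrow> dec k (\<lambda>xs. P xs \<longrightarrow> Q xs)"
  using dec_disj[OF dec_not] by simp

lemma dec_compL: "dec m P \<Longrightarrow> listtot k m L \<Longrightarrow> dec k (\<lambda>xs. P (L xs))"
  unfolding dec_def by (drule tot_compL) auto

lemma tot_bsearch:
  assumes P: "dec (Suc k) P"
  shows "tot (Suc k) (\<lambda>xs. if \<exists>y<hd xs. P (y # tl xs) then Suc (LEAST y. P (y # tl xs)) else 0)"
proof -
  define H where "H = (\<lambda>ys. if ys ! 1 = 0 then (if P (ys ! 0 # drop 2 ys) then Suc (ys ! 0) else 0) else ys ! 1)"
  have lt: "listtot (Suc (Suc k)) (Suc k) (\<lambda>ys. ys ! 0 # drop 2 ys)"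
    by (intro listtot_Cons listtot_drop tot_proj) auto
  have tH: "tot (Suc (Suc k)) H" unfolding H_def
    by (intro tot_ifz tot_if tot_proj tot_Suc tot_const dec_compL[OF P lt]) auto
  have t: "tot (Suc k) (\<lambda>xs. PR (\<lambda>_. 0) H (hd xs) (tl xs))" by (rule tot_PR[OF tot_const tH])
  have e: "PR (\<lambda>_. 0) H b ys = (if \<exists>y<b. P (y # ys) then Suc (LEAST y. P (y # ys)) else 0)" for b ys
  proof (induction b)
    case 0 then show ?case by simp
  next
    case (Suc b)
    show ?case
    proof (cases "\<exists>y<b. P (y # ys)")
      case True
      then show ?thesis using Suc by (auto simp: H_def less_Suc_eq)
    next
      case False
      then have L: "P (b # ys) \<Longrightarrow> (LEAST y. P (y # ys)) = b"
        by (intro Least_equality) (auto simp: not_less[symmetric])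
      show ?thesis using False Suc L by (auto simp: H_def less_Suc_eq)
    qed
  qed
  show ?thesis by (rule tot_cong[OF t]) (simp add: e)
qed

lemma tot_bsearchB:
  assumes P: "dec (Suc k) P" and B: "tot k B"
  shows "tot k (\<lambda>xs. if \<exists>y<B xs. P (y # xs) then Suc (LEAST y. P (y # xs)) else 0)"
proof -
  have lt: "listtot k (Suc k) (\<lambda>xs. B xs # drop 0 xs)" by (intro listtot_Cons B listtot_drop) auto
  show ?thesis by (rule tot_cong[OF tot_compL[OF tot_bsearch[OF P] lt]]) simp
qed

lemma dec_bex:
  assumes P: "dec (Suc k) P" and B: "tot k B"
  shows "dec k (\<lambda>xs. \<exists>y<B xs. P (y # xs))"
proof -
  have "dec k (\<lambda>xs. 0 < (if \<exists>y<B xs. P (y # xs) then Suc (LEAST y. P (y # xs)) else 0))"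
    by (intro dec_less tot_const tot_bsearchB P B)
  then show ?thesis by (rule dec_cong) auto
qed

lemma dec_ball:
  assumes P: "dec (Suc k) P" and B: "tot k B"
  shows "dec k (\<lambda>xs. \<forall>y<B xs. P (y # xs))"
proof -
  have "dec k (\<lambda>xs. \<not> (\<exists>y<B xs. \<not> P (y # xs)))"
    by (rule dec_not[OF dec_bex[OF dec_not[OF P] B]])
  then show ?thesis by (rule dec_cong) auto
qed

lemma dec_all_list: "(\<And>i. i < (m::nat) \<Longrightarrow> tot k (F i)) \<Longrightarrow> dec k (\<lambda>xs. \<forall>i<m. F i xs \<noteq> 0)"
proof (induction m)
  case 0
  have "dec k (\<lambda>xs. (0::nat) = 0)" by (intro dec_eq tot_const)
  then show ?case by (rule dec_cong) auto
next
  case (Suc m)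
  have "dec k (\<lambda>xs. (\<forall>i<m. F i xs \<noteq> 0) \<and> \<not> F m xs = 0)"
    using Suc by (intro dec_conj dec_not dec_eq tot_const) auto
  then show ?case by (rule dec_cong) (auto simp: less_Suc_eq)
qed

lemma part_mu:
  assumes F: "tot (Suc k) F"
  shows "part k (\<lambda>xs. if \<exists>y. F (y # xs) = 0 then Some (LEAST y. F (y # xs) = 0) else None)"
proof -
  obtain g where g: "recfn (Suc k) g" "\<forall>xs. length xs = Suc k \<longrightarrow> g xs = Some (F xs)"
    using F unfolding tot_def by auto
  have "rmu g xs = (if \<exists>y. F (y # xs) = 0 then Some (LEAST y. F (y # xs) = 0) else None)"
    if "length xs = k" for xs
    using g(2) that unfolding rmu_def by auto
  then show ?thesis unfolding part_def using recfn.rmu[OF g(1)] by blast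
qed

lemma stages: "(\<And>i. i < (m::nat) \<Longrightarrow> \<exists>s0::nat. \<forall>s\<ge>s0. Q i s) \<Longrightarrow> \<exists>s0::nat. \<forall>i<m. \<forall>s\<ge>s0. Q i s"
proof (induction m)
  case 0 then show ?case by auto
next
  case (Suc m)
  then obtain a where a: "\<forall>i<m. \<forall>s\<ge>a. Q i s" by auto
  obtain b where b: "\<forall>s\<ge>b. Q m s" using Suc.prems[of m] by auto
  show ?case using a b by (intro exI[of _ "max a b"]) (auto simp: less_Suc_eq)
qed

definition NF :: "nat \<Rightarrow> (nat list \<Rightarrow> nat option) \<Rightarrow> (nat list \<Rightarrow> nat) \<Rightarrow> bool" where
  "NF k f E \<longleftrightarrow> tot (Suc k) E \<and> (\<forall>xs. length xs = k \<longrightarrow>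
     (\<forall>s v. E (s # xs) = Suc v \<longrightarrow> f xs = Some v) \<and>
     (\<forall>v. f xs = Some v \<longrightarrow> (\<exists>s. E (s # xs) \<noteq> 0)) \<and>
     (\<forall>s s'. E (s # xs) \<noteq> 0 \<longrightarrow> s \<le> s' \<longrightarrow> E (s' # xs) \<noteq> 0))"

lemma NF_val: "NF k f E \<Longrightarrow> length xs = k \<Longrightarrow> E (s # xs) \<noteq> 0 \<Longrightarrow> f xs = Some (E (s # xs) - 1)"
  unfolding NF_def by (metis Suc_pred' bot_nat_0.not_eq_extremum)

lemma NF_mono: "NF k f E \<Longrightarrow> length xs = k \<Longrightarrow> E (s # xs) \<noteq> 0 \<Longrightarrow> s \<le> s' \<Longrightarrow> E (s' # xs) = E (s # xs)"
proof -
  assume a: "NF k f E" "length xs = k" "E (s # xs) \<noteq> 0" "s \<le> s'"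
  then have "E (s' # xs) \<noteq> 0" unfolding NF_def by blast
  then show ?thesis using NF_val[OF a(1,2)] a(3) by (metis diff_Suc_1 not0_implies_Suc option.inject)
qed

lemma NF_ex: "NF k f E \<Longrightarrow> length xs = k \<Longrightarrow> f xs = Some v \<Longrightarrow> \<exists>s0. \<forall>s\<ge>s0. E (s # xs) = Suc v"
proof -
  assume a: "NF k f E" "length xs = k" "f xs = Some v"
  then obtain s0 where s0: "E (s0 # xs) \<noteq> 0" unfolding NF_def by blast
  have "E (s # xs) = Suc v" if "s \<ge> s0" for s
    using NF_mono[OF a(1,2) s0 that] NF_val[OF a(1,2) s0] a(3) s0 by auto
  then show ?thesis by blast
qed

lemma NF_tot: "NF k f E \<Longrightarrow> tot (Suc k) E" unfolding NF_def by auto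

lemma NF_zero: "NF 0 (\<lambda>_. Some 0) (\<lambda>_. 1)"
  unfolding NF_def by (auto intro: tot_const)

lemma NF_succ: "NF 1 (\<lambda>xs. Some (Suc (hd xs))) (\<lambda>ys. Suc (Suc (ys ! 1)))"
  unfolding NF_def by (auto intro!: tot_Suc tot_proj simp: length_Suc_conv)

lemma NF_proj: "i < n \<Longrightarrow> NF n (\<lambda>xs. Some (xs ! i)) (\<lambda>ys. Suc (ys ! Suc i))"
  unfolding NF_def by (auto intro!: tot_Suc tot_proj)

lemma NF_comp:
  assumes Eg: "NF (length hs) g Eg" and Es: "\<forall>h\<in>set hs. NF n h (Es h)"
  shows "\<exists>E. NF n (rcomp g hs) E"
proof -
  define m where "m = length hs"
  define Eh where "Eh i = Es (hs ! i)" for i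
  have Ehn: "NF n (hs ! i) (Eh i)" if "i < m" for i using Es that unfolding Eh_def m_def by auto
  define E where "E ys = (if \<forall>i<m. Eh i ys \<noteq> 0 then Eg (hd ys # map (\<lambda>i. Eh i ys - 1) [0..<m]) else 0)" for ys
  have tEh: "tot (Suc n) (Eh i)" if "i < m" for i using Ehn[OF that] by (rule NF_tot)
  have th: "tot (Suc n) (\<lambda>ys. hd ys)"
  proof (rule tot_cong[OF tot_proj[of 0 "Suc n", simplified]])
    fix ys :: "nat list" assume "length ys = Suc n" then show "ys ! 0 = hd ys" by (cases ys) auto
  qed
  have lt: "listtot (Suc n) (Suc m) (\<lambda>ys. hd ys # map (\<lambda>i. Eh i ys - 1) [0..<m])"
    by (intro listtot_Cons listtot_map tot_pred tEh th)
  have tE: "tot (Suc n) E" unfolding E_def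
    using NF_tot[OF Eg, folded m_def]
    by (intro tot_if dec_all_list tEh tot_const tot_compL[OF _ lt])
  have mapeq: "map (\<lambda>h. the (h xs)) hs = map (\<lambda>i. the ((hs ! i) xs)) [0..<m]" for xs
    unfolding m_def by (rule nth_equalityI) auto
  have setc: "(\<forall>h\<in>set hs. P h) \<longleftrightarrow> (\<forall>i<m. P (hs ! i))" for P unfolding m_def by (metis in_set_conv_nth)
  have "(\<forall>s v. E (s # xs) = Suc v \<longrightarrow> rcomp g hs xs = Some v) \<and>
     (\<forall>v. rcomp g hs xs = Some v \<longrightarrow> (\<exists>s. E (s # xs) \<noteq> 0)) \<and>
     (\<forall>s s'. E (s # xs) \<noteq> 0 \<longrightarrow> s \<le> s' \<longrightarrow> E (s' # xs) \<noteq> 0)" if xs: "length xs = n" for xs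
  proof (intro conjI allI impI)
    fix s v assume a: "E (s # xs) = Suc v"
    then have nz: "\<forall>i<m. Eh i (s # xs) \<noteq> 0" unfolding E_def by (auto split: if_splits)
    then have hv: "(hs ! i) xs = Some (Eh i (s # xs) - 1)" if "i < m" for i using NF_val[OF Ehn[OF that] xs] that by auto
    then have "map (\<lambda>h. the (h xs)) hs = map (\<lambda>i. Eh i (s # xs) - 1) [0..<m]" unfolding mapeq by auto
    moreover have "Eg (s # map (\<lambda>i. Eh i (s # xs) - 1) [0..<m]) = Suc v" using a nz unfolding E_def by auto
    ultimately have "g (map (\<lambda>h. the (h xs)) hs) = Some v" using Eg unfolding NF_def m_def by auto
    moreover have "\<forall>h\<in>set hs. h xs \<noteq> None" unfolding setc using hv by auto
    ultimately show "rcomp g hs xs = Some v" unfolding rcomp_def by auto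
  next
    fix v assume a: "rcomp g hs xs = Some v"
    then have def: "\<forall>i<m. (hs ! i) xs \<noteq> None" and gv: "g (map (\<lambda>h. the (h xs)) hs) = Some v"
      unfolding rcomp_def setc by (auto split: if_splits)
    define vs where "vs = map (\<lambda>h. the (h xs)) hs"
    have "length vs = length hs" unfolding vs_def by simp
    then obtain sg where sg: "\<forall>s\<ge>sg. Eg (s # vs) = Suc v" using NF_ex[OF Eg _ gv[folded vs_def]] by blast
    have "\<exists>s0. \<forall>s\<ge>s0. Eh i (s # xs) = Suc (the ((hs ! i) xs))" if "i < m" for i
      using NF_ex[OF Ehn[OF that] xs] def that by auto
    then obtain s0 where s0: "\<forall>i<m. \<forall>s\<ge>s0. Eh i (s # xs) = Suc (the ((hs ! i) xs))"
      using stages[of m "\<lambda>i s. Eh i (s # xs) = Suc (the ((hs ! i) xs))"] by blast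
    define s where "s = max s0 sg"
    have "map (\<lambda>i. Eh i (s # xs) - 1) [0..<m] = vs" unfolding vs_def mapeq using s0 by (auto simp: s_def)
    then have "E (s # xs) = Suc v" using s0 sg unfolding E_def s_def by auto
    then show "\<exists>s. E (s # xs) \<noteq> 0" by (metis nat.distinct(1))
  next
    fix s s' assume a: "E (s # xs) \<noteq> 0" "s \<le> s'"
    then have nz: "\<forall>i<m. Eh i (s # xs) \<noteq> 0" unfolding E_def by (auto split: if_splits)
    then have eq: "\<forall>i<m. Eh i (s' # xs) = Eh i (s # xs)" using NF_mono[OF Ehn xs] a(2) by auto
    then have nz': "\<forall>i<m. Eh i (s' # xs) \<noteq> 0" using nz by auto
    have "Eg (s # map (\<lambda>i. Eh i (s # xs) - 1) [0..<m]) \<noteq> 0" using a nz unfolding E_def by auto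
    then have "Eg (s' # map (\<lambda>i. Eh i (s # xs) - 1) [0..<m]) \<noteq> 0"
      using Eg a(2) unfolding NF_def m_def by auto
    moreover have meq: "map (\<lambda>i. Eh i (s' # xs) - 1) [0..<m] = map (\<lambda>i. Eh i (s # xs) - 1) [0..<m]"
      using eq by simp
    ultimately show "E (s' # xs) \<noteq> 0" using nz' unfolding E_def list.sel(1) meq by simp
  qed
  then show ?thesis using tE unfolding NF_def by blast
qed

lemma NF_prec:
  assumes Eg: "NF n g Eg" and Eh: "NF (Suc (Suc n)) h Eh"
  shows "\<exists>E. NF (Suc n) (rprec g h) E"
proof -
  define H where "H ys = (if ys ! 1 = 0 then 0 else Eh (ys ! 2 # ys ! 0 # (ys ! 1 - 1) # drop 3 ys))" for ys
  define E where "E ys = PR Eg H (ys ! 1) (ys ! 0 # drop 2 ys)" for ys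
  have lt: "listtot (Suc (Suc (Suc n))) (Suc (Suc (Suc n))) (\<lambda>ys. ys ! 2 # ys ! 0 # (ys ! 1 - 1) # drop 3 ys)"
    by (intro listtot_Cons listtot_drop tot_proj tot_pred) auto
  have tH: "tot (Suc (Suc (Suc n))) H" unfolding H_def
    by (intro tot_ifz tot_proj tot_const tot_compL[OF NF_tot[OF Eh] lt]) auto
  have tE: "tot (Suc (Suc n)) E" unfolding E_def
    by (rule tot_PR'[OF NF_tot[OF Eg] tH]) (auto intro!: tot_proj listtot_Cons listtot_drop)
  have Hs: "H (y # p # s # xs) = (if p = 0 then 0 else Eh (s # y # (p - 1) # xs))" for y p s xs
    unfolding H_def by (simp add: numeral_3_eq_3)
  have Es: "E (s # y # xs) = PR Eg H y (s # xs)" for s y xs unfolding E_def by simp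
  have A: "PR Eg H y (s # xs) = Suc v \<Longrightarrow> rprec g h (y # xs) = Some v" if xs: "length xs = n" for y s v xs
  proof (induction y arbitrary: v)
    case 0 then show ?case using Eg xs unfolding NF_def by auto
  next
    case (Suc y)
    then obtain u where u: "PR Eg H y (s # xs) = Suc u" by (cases "PR Eg H y (s # xs)") (auto simp: Hs)
    then have "Eh (s # y # u # xs) = Suc v" using Suc.prems by (simp add: Hs)
    then have "h (y # u # xs) = Some v" using Eh xs unfolding NF_def by auto
    then show ?case using Suc.IH[OF u] by simp
  qed
  have C: "PR Eg H y (s # xs) \<noteq> 0 \<Longrightarrow> s \<le> s' \<Longrightarrow> PR Eg H y (s' # xs) \<noteq> 0" if xs: "length xs = n" for y s s' xs
  proof (induction y)
    case 0 then show ?case using Eg xs unfolding NF_def by auto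
  next
    case (Suc y)
    then obtain u where u: "PR Eg H y (s # xs) = Suc u" by (cases "PR Eg H y (s # xs)") (auto simp: Hs)
    then have e1: "Eh (s # y # u # xs) \<noteq> 0" using Suc.prems by (simp add: Hs)
    have "PR Eg H y (s' # xs) \<noteq> 0" using Suc u by auto
    then obtain u' where u': "PR Eg H y (s' # xs) = Suc u'" by (metis not0_implies_Suc)
    have "u' = u" using A[OF xs u] A[OF xs u'] by simp
    then show ?case using u' NF_mono[OF Eh _ e1 Suc.prems(2)] xs e1 by (simp add: Hs)
  qed
  have B: "rprec g h (y # xs) = Some v \<Longrightarrow> \<exists>s. PR Eg H y (s # xs) \<noteq> 0" if xs: "length xs = n" for y v xs
  proof (induction y arbitrary: v)
    case 0 then show ?case using Eg xs unfolding NF_def by auto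
  next
    case (Suc y)
    then obtain u where u: "rprec g h (y # xs) = Some u" and hv: "h (y # u # xs) = Some v"
      by (auto split: option.splits)
    obtain s1 where s1: "PR Eg H y (s1 # xs) \<noteq> 0" using Suc.IH[OF u] by blast
    obtain s2 where s2: "Eh (s2 # y # u # xs) \<noteq> 0" using Eh hv xs unfolding NF_def by fastforce
    define s where "s = max s1 s2"
    have "PR Eg H y (s # xs) \<noteq> 0" using C[OF xs s1] by (simp add: s_def)
    then obtain u' where u': "PR Eg H y (s # xs) = Suc u'" by (metis not0_implies_Suc)
    then have "u' = u" using A[OF xs u'] u by simp
    moreover have "Eh (s # y # u # xs) \<noteq> 0" using NF_mono[OF Eh _ s2, of s] xs s2 by (simp add: s_def)
    ultimately show ?case using u' by (intro exI[of _ s]) (simp add: Hs)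
  qed
  have "NF (Suc n) (rprec g h) E" unfolding NF_def
  proof (rule conjI[OF tE], intro allI impI)
    fix ys :: "nat list" assume "length ys = Suc n"
    then obtain y xs where ys: "ys = y # xs" and xs: "length xs = n" by (auto simp: length_Suc_conv)
    show "(\<forall>s v. E (s # ys) = Suc v \<longrightarrow> rprec g h ys = Some v) \<and>
      (\<forall>v. rprec g h ys = Some v \<longrightarrow> (\<exists>s. E (s # ys) \<noteq> 0)) \<and>
      (\<forall>s s'. E (s # ys) \<noteq> 0 \<longrightarrow> s \<le> s' \<longrightarrow> E (s' # ys) \<noteq> 0)"
      unfolding ys Es using A[OF xs] B[OF xs] C[OF xs] by blast
  qed
  then show ?thesis by blast
qed

lemma NF_mu:
  assumes Ef: "NF (Suc n) f Ef"
  shows "\<exists>E. NF n (rmu f) E"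
proof -
  define C where "C ys = (Ef (ys ! 1 # ys ! 0 # drop 2 ys) = 1 \<and> (\<forall>z<ys ! 0. Ef (ys ! 1 # z # drop 2 ys) \<noteq> 0))" for ys
  define E where "E ys = (if \<exists>y<ys ! 0. C (y # ys) then Suc (LEAST y. C (y # ys)) else 0)" for ys
  have l1: "listtot (Suc (Suc n)) (Suc (Suc n)) (\<lambda>ys. ys ! 1 # ys ! 0 # drop 2 ys)"
    by (intro listtot_Cons listtot_drop tot_proj) auto
  have l2: "listtot (Suc (Suc (Suc n))) (Suc (Suc n)) (\<lambda>ys. ys ! 2 # ys ! 0 # drop 3 ys)"
    by (intro listtot_Cons listtot_drop tot_proj) auto
  have d2: "dec (Suc (Suc (Suc n))) (\<lambda>ys. Ef (ys ! 2 # ys ! 0 # drop 3 ys) \<noteq> 0)"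
    by (intro dec_not dec_eq tot_const tot_compL[OF NF_tot[OF Ef] l2])
  have d1: "dec (Suc (Suc n)) (\<lambda>ys. \<forall>z<ys ! 0. (\<lambda>zs. Ef (zs ! 2 # zs ! 0 # drop 3 zs) \<noteq> 0) (z # ys))"
    by (rule dec_ball[OF d2 tot_proj]) simp
  have dC: "dec (Suc (Suc n)) C"
    by (rule dec_cong[OF dec_conj[OF dec_eq[OF tot_compL[OF NF_tot[OF Ef] l1] tot_const] d1]])
      (simp add: C_def numeral_3_eq_3 numeral_2_eq_2)
  have tE: "tot (Suc n) E" unfolding E_def by (rule tot_bsearchB[OF dC tot_proj]) simp
  define cond where "cond s y xs = (Ef (s # y # xs) = 1 \<and> (\<forall>z<y. Ef (s # z # xs) \<noteq> 0))" for s y xs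
  have Cc: "C (y # s # xs) = cond s y xs" for y s xs unfolding C_def cond_def by simp
  have Es: "E (s # xs) = (if \<exists>y<s. cond s y xs then Suc (LEAST y. cond s y xs) else 0)" for s xs
    unfolding E_def Cc by simp
  have "NF n (rmu f) E" unfolding NF_def
  proof (rule conjI[OF tE], intro allI impI)
    fix xs :: "nat list" assume xs: "length xs = n"
    have xs': "length (y # xs) = Suc n" for y using xs by simp
    have val: "Ef (s # y # xs) \<noteq> 0 \<Longrightarrow> f (y # xs) = Some (Ef (s # y # xs) - 1)" for s y
      using NF_val[OF Ef xs'] .
    define cf where "cf y = (f (y # xs) = Some 0 \<and> (\<forall>z<y. f (z # xs) \<noteq> None))" for y
    have rmu_eq: "rmu f xs = (if \<exists>y. cf y then Some (LEAST y. cf y) else None)" unfolding rmu_def cf_def by simp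
    have P1: "E (s # xs) = Suc v \<longrightarrow> rmu f xs = Some v" for s v
    proof
      assume a: "E (s # xs) = Suc v"
      then have ex: "\<exists>y<s. cond s y xs" and v: "v = (LEAST y. cond s y xs)" unfolding Es by (auto split: if_splits)
      then have cv: "cond s v xs" by (metis LeastI)
      have cfv: "cf v" unfolding cf_def
      proof (intro conjI allI impI)
        show "f (v # xs) = Some 0" using cv val[of s v] unfolding cond_def by simp
        fix z assume "z < v" then show "f (z # xs) \<noteq> None" using cv val[of s z] unfolding cond_def by auto
      qed
      have "(LEAST y. cf y) = v"
      proof (rule Least_equality[where P=cf, OF cfv], rule ccontr)
        fix y assume cy: "cf y" and "\<not> v \<le> y"
        then have yv: "y < v" by simp
        have "Ef (s # y # xs) \<noteq> 0" using cv yv unfolding cond_def by auto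
        then have "Ef (s # y # xs) = 1" using val[of s y] cy unfolding cf_def by auto
        moreover have "\<forall>z<y. Ef (s # z # xs) \<noteq> 0" using cv yv unfolding cond_def by auto
        ultimately have "cond s y xs" unfolding cond_def by simp
        then have "v \<le> y" unfolding v by (rule Least_le)
        then show False using yv by simp
      qed
      then show "rmu f xs = Some v" unfolding rmu_eq using cfv by auto
    qed
    have P2: "rmu f xs = Some v \<longrightarrow> (\<exists>s. E (s # xs) \<noteq> 0)" for v
    proof
      assume "rmu f xs = Some v"
      then have ex: "\<exists>y. cf y" and v: "v = (LEAST y. cf y)" unfolding rmu_eq by (auto split: if_splits)
      then have cfv: "cf v" by (metis LeastI)
      have "\<exists>s0. \<forall>s\<ge>s0. Ef (s # z # xs) = Suc (the (f (z # xs)))" if "z < Suc v" for z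
      proof -
        have "f (z # xs) \<noteq> None" using cfv that unfolding cf_def by (auto simp: less_Suc_eq)
        then show ?thesis using NF_ex[OF Ef xs'] by auto
      qed
      then obtain s0 where s0: "\<forall>z<Suc v. \<forall>s\<ge>s0. Ef (s # z # xs) = Suc (the (f (z # xs)))"
        using stages[of "Suc v" "\<lambda>z s. Ef (s # z # xs) = Suc (the (f (z # xs)))"] by blast
      define s where "s = max s0 (Suc v)"
      have "cond s v xs" using s0 cfv unfolding cond_def cf_def s_def by auto
      moreover have "v < s" unfolding s_def by simp
      ultimately have "E (s # xs) \<noteq> 0" unfolding Es by auto
      then show "\<exists>s. E (s # xs) \<noteq> 0" by blast
    qed
    have P3: "E (s # xs) \<noteq> 0 \<longrightarrow> s \<le> s' \<longrightarrow> E (s' # xs) \<noteq> 0" for s s'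
    proof (intro impI)
      assume a: "E (s # xs) \<noteq> 0" "s \<le> s'"
      then obtain y where y: "y < s" "cond s y xs" unfolding Es by (auto split: if_splits)
      have "Ef (s' # z # xs) = Ef (s # z # xs)" if "z \<le> y" for z
        using y that a(2) NF_mono[OF Ef xs', of s z s'] unfolding cond_def
        by (metis le_neq_implies_less zero_neq_one)
      then have "cond s' y xs" using y(2) unfolding cond_def by auto
      moreover have "y < s'" using y(1) a(2) by simp
      ultimately have "\<exists>y<s'. cond s' y xs" by blast
      then show "E (s' # xs) \<noteq> 0" unfolding Es by auto
    qed
    show "(\<forall>s v. E (s # xs) = Suc v \<longrightarrow> rmu f xs = Some v) \<and>
      (\<forall>v. rmu f xs = Some v \<longrightarrow> (\<exists>s. E (s # xs) \<noteq> 0)) \<and>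
      (\<forall>s s'. E (s # xs) \<noteq> 0 \<longrightarrow> s \<le> s' \<longrightarrow> E (s' # xs) \<noteq> 0)"
      using P1 P2 P3 by blast
  qed
  then show ?thesis by blast
qed

theorem recfn_NF: "recfn k f \<Longrightarrow> \<exists>E. NF k f E"
proof (induction rule: recfn.induct)
  case rzero then show ?case using NF_zero by blast
next
  case rsucc then show ?case using NF_succ by blast
next
  case (rproj i n) then show ?case using NF_proj by blast
next
  case (rcomp hs g n)
  then obtain Eg where Eg: "NF (length hs) g Eg" by blast
  from rcomp have "\<forall>h\<in>set hs. \<exists>E. NF n h E" by blast
  then obtain Es where "\<forall>h\<in>set hs. NF n h (Es h)" by (metis bchoice)
  then show ?case using NF_comp[OF Eg] by blast
next
  case (rprec n g h) then show ?case using NF_prec by blast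
next
  case (rmu n f) then show ?case using NF_mu by blast
qed

lemma len3: "length xs = 3 \<Longrightarrow> xs = [xs ! 0, xs ! 1, xs ! 2]"
  by (auto simp: numeral_3_eq_3 length_Suc_conv)

lemma len2: "length xs = 2 \<Longrightarrow> xs = [xs ! 0, xs ! 1]"
  by (auto simp: numeral_2_eq_2 length_Suc_conv)

lemma len1: "length xs = 1 \<Longrightarrow> xs = [xs ! 0]"
  by (auto simp: length_Suc_conv)

lemma dec3_of: "decidable3 R \<Longrightarrow> dec 3 (\<lambda>xs. R (xs ! 0) (xs ! 1) (xs ! 2))"
  unfolding decidable3_def dec_def tot_def by (metis len3)

lemma tot1_of: "computable1 t \<Longrightarrow> tot 1 (\<lambda>xs. t (xs ! 0))"
  unfolding computable1_def tot_def by (metis len1)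

lemma tot2_of: "computable2 p \<Longrightarrow> tot 2 (\<lambda>xs. p (xs ! 0) (xs ! 1))"
  unfolding computable2_def tot_def by (metis len2)

lemma decidable3_of: "dec 3 P \<Longrightarrow> decidable3 (\<lambda>x y z. P [x, y, z])"
  unfolding decidable3_def dec_def tot_def by (metis length_Cons list.size(3) numeral_3_eq_3)

lemma ce_of: "part 2 f \<Longrightarrow> ce_rel2 (\<lambda>x y. f [x, y] \<noteq> None)"
  unfolding ce_rel2_def part_def by (metis length_Cons list.size(3) numeral_2_eq_2)

lemma computable1_of: "tot 1 F \<Longrightarrow> computable1 (\<lambda>x. F [x])"
  unfolding computable1_def tot_def by auto

lemma tot_tri1: "tot 1 (\<lambda>xs. triangle (xs ! 0))"
proof -
  have t: "tot (Suc 0) (\<lambda>xs. PR (\<lambda>_. 0) (\<lambda>ys. ys ! 1 + Suc (ys ! 0)) (hd xs) (tl xs))"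
    by (intro tot_PR tot_add tot_Suc tot_proj tot_const) auto
  have e: "PR (\<lambda>_. 0) (\<lambda>ys. ys ! 1 + Suc (ys ! 0)) y [] = triangle y" for y
    by (induction y) (auto simp: triangle_Suc)
  show ?thesis unfolding One_nat_def by (rule tot_cong[OF t]) (insert e, auto simp: length_Suc_conv)
qed

lemma tot_pe: "tot k A \<Longrightarrow> tot k B \<Longrightarrow> tot k (\<lambda>xs. prod_encode (A xs, B xs))"
proof -
  assume a: "tot k A" "tot k B"
  have "tot k (\<lambda>xs. triangle (A xs + B xs) + A xs)"
    by (intro tot_add a tot_un[OF tot_tri1])
  then show ?thesis by (rule tot_cong) (simp add: prod_encode_def)
qed

lemma tot_fst1: "tot 1 (\<lambda>xs. fst (prod_decode (xs ! 0)))"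
proof -
  define P where "P ys = (\<exists>b<Suc (ys ! 1). prod_encode (ys ! 0, b) = ys ! 1)" for ys
  have d: "dec (Suc (Suc 1)) (\<lambda>zs. prod_encode (zs ! 1, zs ! 0) = zs ! 2)"
    by (intro dec_eq tot_pe tot_proj) auto
  have tb: "tot (Suc 1) (\<lambda>ys. Suc (ys ! 1))" by (intro tot_Suc tot_proj) simp
  have dP: "dec (Suc 1) P" by (rule dec_cong[OF dec_bex[OF d tb]]) (simp add: P_def)
  have t: "tot 1 (\<lambda>xs. if \<exists>y<Suc (xs ! 0). P (y # xs) then Suc (LEAST y. P (y # xs)) else 0)"
    by (rule tot_bsearchB[OF dP]) (auto intro!: tot_Suc tot_proj)
  have "tot 1 (\<lambda>xs. (if \<exists>y<Suc (xs ! 0). P (y # xs) then Suc (LEAST y. P (y # xs)) else 0) - 1)"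
    by (rule tot_pred[OF t])
  then show ?thesis
  proof (rule tot_cong)
    fix xs :: "nat list" assume "length xs = 1"
    then obtain w where xs: "xs = [w]" by (metis len1)
    obtain a b where ab: "prod_decode w = (a, b)" by fastforce
    then have pe: "prod_encode (a, b) = w" by (metis prod_decode_inverse)
    have Pa: "P [a, w]" unfolding P_def using pe le_prod_encode_2[of b a] by auto
    have a_le: "a < Suc w" using pe le_prod_encode_1[of a b] by auto
    have L: "(LEAST y. P [y, w]) = a"
    proof (rule Least_equality[where P="\<lambda>y. P [y, w]", OF Pa])
      fix y assume "P [y, w]"
      then obtain b' where "prod_encode (y, b') = w" unfolding P_def by auto
      then have "prod_decode w = (y, b')" by (metis prod_encode_inverse)
      then show "a \<le> y" using ab by simp
    qed
    show "(if \<exists>y<Suc (xs ! 0). P (y # xs) then Suc (LEAST y. P (y # xs)) else 0) - 1 = fst (prod_decode (xs ! 0))"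
      using Pa a_le L ab unfolding xs by auto
  qed
qed

lemma tot_snd1: "tot 1 (\<lambda>xs. snd (prod_decode (xs ! 0)))"
proof -
  define P where "P ys = (\<exists>b<Suc (ys ! 1). prod_encode (b, ys ! 0) = ys ! 1)" for ys
  have d: "dec (Suc (Suc 1)) (\<lambda>zs. prod_encode (zs ! 0, zs ! 1) = zs ! 2)"
    by (intro dec_eq tot_pe tot_proj) auto
  have tb: "tot (Suc 1) (\<lambda>ys. Suc (ys ! 1))" by (intro tot_Suc tot_proj) simp
  have dP: "dec (Suc 1) P" by (rule dec_cong[OF dec_bex[OF d tb]]) (simp add: P_def)
  have t: "tot 1 (\<lambda>xs. if \<exists>y<Suc (xs ! 0). P (y # xs) then Suc (LEAST y. P (y # xs)) else 0)"
    by (rule tot_bsearchB[OF dP]) (auto intro!: tot_Suc tot_proj)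
  have "tot 1 (\<lambda>xs. (if \<exists>y<Suc (xs ! 0). P (y # xs) then Suc (LEAST y. P (y # xs)) else 0) - 1)"
    by (rule tot_pred[OF t])
  then show ?thesis
  proof (rule tot_cong)
    fix xs :: "nat list" assume "length xs = 1"
    then obtain w where xs: "xs = [w]" by (metis len1)
    obtain a b where ab: "prod_decode w = (a, b)" by fastforce
    then have pe: "prod_encode (a, b) = w" by (metis prod_decode_inverse)
    have Pa: "P [b, w]" unfolding P_def using pe le_prod_encode_1[of a b] by auto
    have a_le: "b < Suc w" using pe le_prod_encode_2[of b a] by auto
    have L: "(LEAST y. P [y, w]) = b"
    proof (rule Least_equality[where P="\<lambda>y. P [y, w]", OF Pa])
      fix y assume "P [y, w]"
      then obtain b' where "prod_encode (b', y) = w" unfolding P_def by auto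
      then have "prod_decode w = (b', y)" by (metis prod_encode_inverse)
      then show "b \<le> y" using ab by simp
    qed
    show "(if \<exists>y<Suc (xs ! 0). P (y # xs) then Suc (LEAST y. P (y # xs)) else 0) - 1 = snd (prod_decode (xs ! 0))"
      using Pa a_le L ab unfolding xs by auto
  qed
qed

lemma tot_fst: "tot k A \<Longrightarrow> tot k (\<lambda>xs. fst (prod_decode (A xs)))"
  by (rule tot_un[OF tot_fst1])

lemma tot_snd: "tot k A \<Longrightarrow> tot k (\<lambda>xs. snd (prod_decode (A xs)))"
  by (rule tot_un[OF tot_snd1])

lemma interp_char:
  fixes Hs :: "nat \<Rightarrow> nat \<Rightarrow> nat \<Rightarrow> bool"
  assumes mem: "\<And>p q. (p, q) \<in> Rel \<longleftrightarrow> (\<exists>s. Hs s p q)"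
    and mono: "\<And>s s' p q. Hs s p q \<Longrightarrow> s \<le> s' \<Longrightarrow> Hs s' p q"
  shows "interpolable Rel \<longleftrightarrow> (\<forall>y a b s. \<exists>x c s'. Hs s' x y \<and>
           (Hs s a y \<and> Hs s b y \<longrightarrow> Hs s' c y \<and> Hs s' a c \<and> Hs s' b c))"
proof
  assume I: "interpolable Rel"
  show "\<forall>y a b s. \<exists>x c s'. Hs s' x y \<and> (Hs s a y \<and> Hs s b y \<longrightarrow> Hs s' c y \<and> Hs s' a c \<and> Hs s' b c)"
  proof (intro allI)
    fix y a b s
    obtain x where "(x, y) \<in> Rel" using I unfolding interpolable_def by blast
    then obtain s1 where s1: "Hs s1 x y" using mem by blast
    show "\<exists>x c s'. Hs s' x y \<and> (Hs s a y \<and> Hs s b y \<longrightarrow> Hs s' c y \<and> Hs s' a c \<and> Hs s' b c)"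
    proof (cases "Hs s a y \<and> Hs s b y")
      case True
      then have "(a, y) \<in> Rel" "(b, y) \<in> Rel" using mem by blast+
      then obtain c where "(c, y) \<in> Rel" "(a, c) \<in> Rel" "(b, c) \<in> Rel" using I unfolding interpolable_def by blast
      then obtain s2 s3 s4 where s234: "Hs s2 c y" "Hs s3 a c" "Hs s4 b c" using mem by meson
      define s' where "s' = max s1 (max s2 (max s3 s4))"
      have "Hs s' x y" "Hs s' c y" "Hs s' a c" "Hs s' b c"
        using mono[OF s1] mono[OF s234(1)] mono[OF s234(2)] mono[OF s234(3)] unfolding s'_def by auto
      then show ?thesis by blast
    next
      case False
      then show ?thesis using s1 by blast
    qed
  qed
next
  assume C: "\<forall>y a b s. \<exists>x c s'. Hs s' x y \<and> (Hs s a y \<and> Hs s b y \<longrightarrow> Hs s' c y \<and> Hs s' a c \<and> Hs s' b c)"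
  show "interpolable Rel" unfolding interpolable_def
  proof (intro allI conjI ballI)
    fix y
    obtain x s' where "Hs s' x y" using C by blast
    then show "{x. (x, y) \<in> Rel} \<noteq> {}" using mem by blast
    fix a b assume "a \<in> {x. (x, y) \<in> Rel}" "b \<in> {x. (x, y) \<in> Rel}"
    then obtain sa sb where "Hs sa a y" "Hs sb b y" using mem by auto
    then have "Hs (max sa sb) a y" "Hs (max sa sb) b y" using mono by auto
    then obtain c s' where "Hs s' c y" "Hs s' a c" "Hs s' b c" using C by blast
    then show "\<exists>c\<in>{x. (x, y) \<in> Rel}. (a, c) \<in> Rel \<and> (b, c) \<in> Rel" using mem by blast
  qed
qed

lemma Q_trans: "trans {(i, j). \<exists>x::nat. i = 2 * x + 1 \<and> (j = i \<or> (j = 2 * x \<and> P x))}"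
  unfolding trans_def by auto

lemma Q_interp: "interpolable {(i, j). \<exists>x::nat. i = 2 * x + 1 \<and> (j = i \<or> (j = 2 * x \<and> P x))} \<longleftrightarrow> (\<forall>x. P x)"
proof
  assume I: "interpolable {(i, j). \<exists>x::nat. i = 2 * x + 1 \<and> (j = i \<or> (j = 2 * x \<and> P x))}"
  show "\<forall>x. P x"
  proof
    fix x
    obtain i where "(i, 2 * x) \<in> {(i, j). \<exists>x::nat. i = 2 * x + 1 \<and> (j = i \<or> (j = 2 * x \<and> P x))}"
      using I unfolding interpolable_def by blast
    then obtain x' where "i = 2 * x' + 1" "2 * x = i \<or> (2 * x = 2 * x' \<and> P x')" by blast
    note h = this
    have "2 * x \<noteq> i" using h(1) by presburger
    then show "P x" using h(2) by auto
  qed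
next
  assume P: "\<forall>x. P x"
  show "interpolable {(i, j). \<exists>x::nat. i = 2 * x + 1 \<and> (j = i \<or> (j = 2 * x \<and> P x))}"
    unfolding interpolable_def
  proof (intro allI conjI ballI)
    fix y :: nat
    define c where "c = (if even y then y + 1 else y)"
    have cy: "(c, y) \<in> {(i, j). \<exists>x::nat. i = 2 * x + 1 \<and> (j = i \<or> (j = 2 * x \<and> P x))}"
      using P unfolding c_def by (cases "even y") (auto elim!: evenE oddE)
    have seg: "a = c" if "(a, y) \<in> {(i, j). \<exists>x::nat. i = 2 * x + 1 \<and> (j = i \<or> (j = 2 * x \<and> P x))}" for a
      using that unfolding c_def by auto
    have cc: "(c, c) \<in> {(i, j). \<exists>x::nat. i = 2 * x + 1 \<and> (j = i \<or> (j = 2 * x \<and> P x))}"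
      using cy by auto
    show "{x. (x, y) \<in> {(i, j). \<exists>x::nat. i = 2 * x + 1 \<and> (j = i \<or> (j = 2 * x \<and> P x))}} \<noteq> {}"
      using cy by blast
    fix a b assume "a \<in> {x. (x, y) \<in> {(i, j). \<exists>x::nat. i = 2 * x + 1 \<and> (j = i \<or> (j = 2 * x \<and> P x))}}"
      "b \<in> {x. (x, y) \<in> {(i, j). \<exists>x::nat. i = 2 * x + 1 \<and> (j = i \<or> (j = 2 * x \<and> P x))}}"
    then have "a = c" "b = c" using seg by auto
    then show "\<exists>c\<in>{x. (x, y) \<in> {(i, j). \<exists>x::nat. i = 2 * x + 1 \<and> (j = i \<or> (j = 2 * x \<and> P x))}}.
        (a, c) \<in> {(i, j). \<exists>x::nat. i = 2 * x + 1 \<and> (j = i \<or> (j = 2 * x \<and> P x))} \<and>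
        (b, c) \<in> {(i, j). \<exists>x::nat. i = 2 * x + 1 \<and> (j = i \<or> (j = 2 * x \<and> P x))}"
      using cy cc by blast
  qed
qed

lemma tot_pair: "computable2 pair \<Longrightarrow> tot k A \<Longrightarrow> tot k B \<Longrightarrow> tot k (\<lambda>xs. pair (A xs) (B xs))"
  by (rule tot_bin[OF tot2_of])

lemma tot_t: "computable1 t \<Longrightarrow> tot k A \<Longrightarrow> tot k (\<lambda>xs. t (A xs))"
  by (rule tot_un[OF tot1_of])

lemma dec_R:
  assumes R: "decidable3 R" and "tot k A" "tot k B" "tot k C"
  shows "dec k (\<lambda>xs. R (A xs) (B xs) (C xs))"
proof -
  have l: "listtot k (Suc (Suc (Suc 0))) (\<lambda>xs. [A xs, B xs, C xs])"
    by (intro listtot_Cons listtot_Nil assms)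
  show ?thesis by (rule dec_cong[OF dec_compL[OF dec3_of[OF R, unfolded numeral_3_eq_3] l]]) simp
qed

lemma ce_mu:
  assumes F: "tot (Suc 2) F" and P: "\<And>x y. (\<exists>w. F [w, x, y] = 0) \<longleftrightarrow> P x y"
  shows "ce_rel2 P"
proof -
  obtain g where g: "recfn 2 g"
    and gv: "\<And>xs. length xs = 2 \<Longrightarrow> g xs = (if \<exists>y. F (y # xs) = 0 then Some (LEAST y. F (y # xs) = 0) else None)"
    using part_mu[OF F] unfolding part_def by blast
  have "P x y \<longleftrightarrow> g [x, y] \<noteq> None" for x y using gv[of "[x, y]"] P[of x y] by simp
  then show ?thesis unfolding ce_rel2_def using g by blast
qed

lemma hardness:
  fixes W :: "nat \<Rightarrow> nat set" and pair :: "nat \<Rightarrow> nat \<Rightarrow> nat"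
    and V :: "nat \<Rightarrow> (nat \<times> nat) set" and t :: "nat \<Rightarrow> nat"
  assumes std: "standard_numbering W"
    and bij: "bij (\<lambda>(i, j). pair i j)"
    and cp: "computable2 pair"
    and V: "\<And>n. V n = {(i, j). pair i j \<in> W n}"
    and Vt: "\<And>n. V (t n) = (V n)\<^sup>+"
    and B: "Pi02 B"
  shows "many_one_reducible B {n. interpolable (V (t n))}"
proof -
  obtain R where dR: "decidable3 R" and BR: "\<forall>n. n \<in> B \<longleftrightarrow> (\<forall>x. \<exists>y. R n x y)"
    using B unfolding Pi02_def by blast
  define d1 where "d1 w = fst (prod_decode w)" for w
  define d2 where "d2 w = fst (prod_decode (snd (prod_decode w)))" for w
  define d3 where "d3 w = snd (prod_decode (snd (prod_decode w)))" for w
  define cnd where "cnd w n z = ((d3 w = 0 \<and> z = pair (2 * d1 w + 1) (2 * d1 w + 1)) \<or>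
      (\<not> d3 w = 0 \<and> z = pair (2 * d1 w + 1) (2 * d1 w) \<and> R n (d1 w) (d2 w)))" for w n z
  define F where "F ws = (if cnd (ws ! 0) (ws ! 1) (ws ! 2) then 0 else 1::nat)" for ws
  have tF: "tot (Suc 2) F" unfolding F_def cnd_def d1_def d2_def d3_def
    by (intro tot_if tot_const dec_disj dec_conj dec_not dec_eq dec_R[OF dR] tot_pair[OF cp]
        tot_add tot_mult tot_fst tot_snd tot_proj) auto
  have key: "(\<exists>w. F [w, x, y] = 0) \<longleftrightarrow> (\<exists>w. cnd w x y)" for x y by (simp add: F_def)
  have ce: "ce_rel2 (\<lambda>n z. \<exists>w. cnd w n z)" by (rule ce_mu[OF tF key])
  define U where "U n = {z. \<exists>w. cnd w n z}" for n
  have "computable_numbering U" unfolding computable_numbering_def U_def using ce by simp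
  then obtain f where cf: "computable1 f" and Uf: "\<And>n. U n = W (f n)"
    using std unfolding standard_numbering_def by blast
  have pinj: "pair i j = pair i' j' \<longleftrightarrow> i = i' \<and> j = j'" for i j i' j'
  proof
    assume "pair i j = pair i' j'"
    then have "(\<lambda>(i, j). pair i j) (i, j) = (\<lambda>(i, j). pair i j) (i', j')" by simp
    then have "(i, j) = (i', j')" by (rule injD[OF bij_is_inj[OF bij]])
    then show "i = i' \<and> j = j'" by simp
  qed simp
  have Uc: "z \<in> U n \<longleftrightarrow> (\<exists>x. z = pair (2 * x + 1) (2 * x + 1) \<or> (z = pair (2 * x + 1) (2 * x) \<and> (\<exists>y. R n x y)))" for n z
  proof
    assume "z \<in> U n"
    then obtain w where "cnd w n z" unfolding U_def by blast
    then have "z = pair (2 * d1 w + 1) (2 * d1 w + 1) \<or> (z = pair (2 * d1 w + 1) (2 * d1 w) \<and> R n (d1 w) (d2 w))"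
      unfolding cnd_def by auto
    then show "\<exists>x. z = pair (2 * x + 1) (2 * x + 1) \<or> (z = pair (2 * x + 1) (2 * x) \<and> (\<exists>y. R n x y))"
      by blast
  next
    assume "\<exists>x. z = pair (2 * x + 1) (2 * x + 1) \<or> (z = pair (2 * x + 1) (2 * x) \<and> (\<exists>y. R n x y))"
    then obtain x where "z = pair (2 * x + 1) (2 * x + 1) \<or> (z = pair (2 * x + 1) (2 * x) \<and> (\<exists>y. R n x y))" by blast
    then show "z \<in> U n"
    proof
      assume "z = pair (2 * x + 1) (2 * x + 1)"
      then have "cnd (prod_encode (x, prod_encode (0, 0))) n z"
        unfolding cnd_def d1_def d2_def d3_def by simp
      then show ?thesis unfolding U_def by blast
    next
      assume "z = pair (2 * x + 1) (2 * x) \<and> (\<exists>y. R n x y)"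
      then obtain y where "z = pair (2 * x + 1) (2 * x)" "R n x y" by blast
      then have "cnd (prod_encode (x, prod_encode (y, 1))) n z"
        unfolding cnd_def d1_def d2_def d3_def by simp
      then show ?thesis unfolding U_def by blast
    qed
  qed
  define Q where "Q n = {(i, j). \<exists>x::nat. i = 2 * x + 1 \<and> (j = i \<or> (j = 2 * x \<and> (\<exists>y. R n x y)))}" for n
  have VQ: "V (f n) = Q n" for n
  proof -
    have "(i, j) \<in> V (f n) \<longleftrightarrow> (i, j) \<in> Q n" for i j
      unfolding V Q_def using Uc[of "pair i j" n, unfolded Uf] by (auto simp: pinj)
    then show ?thesis by auto
  qed
  have VtQ: "V (t (f n)) = Q n" for n unfolding Vt VQ Q_def by (rule trancl_id[OF Q_trans])
  have "n \<in> B \<longleftrightarrow> f n \<in> {n. interpolable (V (t n))}" for n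
  proof -
    have "f n \<in> {n. interpolable (V (t n))} \<longleftrightarrow> interpolable (Q n)" using VtQ by simp
    also have "\<dots> \<longleftrightarrow> (\<forall>x. \<exists>y. R n x y)" unfolding Q_def by (rule Q_interp)
    finally show ?thesis using BR by simp
  qed
  then show ?thesis unfolding many_one_reducible_def using cf by blast
qed

lemma membership:
  fixes W :: "nat \<Rightarrow> nat set" and pair :: "nat \<Rightarrow> nat \<Rightarrow> nat"
    and V :: "nat \<Rightarrow> (nat \<times> nat) set" and t :: "nat \<Rightarrow> nat"
  assumes std: "standard_numbering W"
    and cp: "computable2 pair"
    and V: "\<And>n. V n = {(i, j). pair i j \<in> W n}"
    and ct: "computable1 t"
  shows "Pi02 {n. interpolable (V (t n))}"
proof -
  obtain g0 where g0: "recfn 2 g0" and gW: "\<And>n x. x \<in> W n \<longleftrightarrow> g0 [n, x] \<noteq> None"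
    using std unfolding standard_numbering_def computable_numbering_def ce_rel2_def by blast
  obtain E0 where nf: "NF 2 g0 E0" using recfn_NF[OF g0] by blast
  have tE0: "tot (Suc (Suc (Suc 0))) E0" using NF_tot[OF nf] by (simp add: numeral_2_eq_2)
  have dHs: "dec k (\<lambda>xs. E0 [S xs, t (M xs), pair (P xs) (Q xs)] \<noteq> 0)"
    if "tot k S" "tot k M" "tot k P" "tot k Q" for k S M P Q
  proof -
    have l: "listtot k (Suc (Suc (Suc 0))) (\<lambda>xs. [S xs, t (M xs), pair (P xs) (Q xs)])"
      by (intro listtot_Cons listtot_Nil that tot_t[OF ct] tot_pair[OF cp])
    show ?thesis by (intro dec_not dec_eq tot_const tot_compL[OF tE0 l])
  qed
  define Hs where "Hs s m p q = (E0 [s, t m, pair p q] \<noteq> 0)" for s m p q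
  have len: "length [t m, pair p q] = 2" for m p q by simp
  have mem: "(p, q) \<in> V (t m) \<longleftrightarrow> (\<exists>s. Hs s m p q)" for p q m
  proof -
    have "(p, q) \<in> V (t m) \<longleftrightarrow> g0 [t m, pair p q] \<noteq> None" using V gW by simp
    also have "\<dots> \<longleftrightarrow> (\<exists>s. E0 (s # [t m, pair p q]) \<noteq> 0)"
      using nf len NF_val[OF nf len] unfolding NF_def by blast
    finally show ?thesis unfolding Hs_def by simp
  qed
  have mono: "Hs s m p q \<Longrightarrow> s \<le> s' \<Longrightarrow> Hs s' m p q" for s s' m p q
    using nf len unfolding NF_def Hs_def by blast
  define Phi where "Phi m y a b s x c s' = (Hs s' m x y \<and>
           (Hs s m a y \<and> Hs s m b y \<longrightarrow> Hs s' m c y \<and> Hs s' m a c \<and> Hs s' m b c))" for m y a b s x c s'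
  have ic: "interpolable (V (t m)) \<longleftrightarrow> (\<forall>y a b s. \<exists>x c s'. Phi m y a b s x c s')" for m
    unfolding Phi_def by (rule interp_char[OF mem mono])
  define u1 where "u1 u = fst (prod_decode u)" for u
  define u2 where "u2 u = fst (prod_decode (snd (prod_decode u)))" for u
  define u3 where "u3 u = fst (prod_decode (snd (prod_decode (snd (prod_decode u)))))" for u
  define u4 where "u4 u = snd (prod_decode (snd (prod_decode (snd (prod_decode u)))))" for u
  define w3 where "w3 u = snd (prod_decode (snd (prod_decode u)))" for u
  define R' where "R' m u w = Phi m (u1 u) (u2 u) (u3 u) (u4 u) (u1 w) (u2 w) (w3 w)" for m u w
  have "dec 3 (\<lambda>xs. R' (xs ! 0) (xs ! 1) (xs ! 2))"
    unfolding R'_def Phi_def Hs_def u1_def u2_def u3_def u4_def w3_def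
    by (intro dec_conj dec_imp dHs tot_fst tot_snd tot_proj) auto
  from decidable3_of[OF this] have dR': "decidable3 R'" by simp
  have eq: "(\<forall>y a b s. \<exists>x c s'. Phi m y a b s x c s') \<longleftrightarrow> (\<forall>u. \<exists>w. R' m u w)" for m
  proof
    assume A: "\<forall>y a b s. \<exists>x c s'. Phi m y a b s x c s'"
    show "\<forall>u. \<exists>w. R' m u w"
    proof
      fix u
      obtain x c s' where "Phi m (u1 u) (u2 u) (u3 u) (u4 u) x c s'" using A by blast
      then have "R' m u (prod_encode (x, prod_encode (c, s')))"
        unfolding R'_def u1_def u2_def w3_def by simp
      then show "\<exists>w. R' m u w" by blast
    qed
  next
    assume A: "\<forall>u. \<exists>w. R' m u w"
    show "\<forall>y a b s. \<exists>x c s'. Phi m y a b s x c s'"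
    proof (intro allI)
      fix y a b s
      obtain w where "R' m (prod_encode (y, prod_encode (a, prod_encode (b, s)))) w" using A by blast
      then have "Phi m y a b s (u1 w) (u2 w) (w3 w)" unfolding R'_def u1_def u2_def u3_def u4_def by simp
      then show "\<exists>x c s'. Phi m y a b s x c s'" by blast
    qed
  qed
  show ?thesis unfolding Pi02_def using dR' ic eq by blast
qed

theorem proposition18:
  fixes W :: "nat \<Rightarrow> nat set"
    and pair :: "nat \<Rightarrow> nat \<Rightarrow> nat"
    and V :: "nat \<Rightarrow> (nat \<times> nat) set"
    and t :: "nat \<Rightarrow> nat"
  assumes "standard_numbering W"
    and "bij (\<lambda>(i, j). pair i j)"
    and "computable2 pair"
    and "\<And>n. V n = {(i, j). pair i j \<in> W n}"
    and "computable1 t"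
    and "\<And>n. V (t n) = (V n)\<^sup>+"
  shows "Pi02_complete {n. interpolable (V (t n))}"
  unfolding Pi02_complete_def
  using membership[OF assms(1,3,4,5)] hardness[OF assms(1,2,3,4,6)] by blast

end
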